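(* Let $T>K$ be positive integers. Consider the linear model $\mathbf{y}=\mathbf{X}\boldsymbol{\beta}+\mathbf{u}$, where $\mathbf{X}$ is a known non-stochastic real $(T\times K)$ matrix (possibly of rank less than $K$), $\boldsymbol{\beta}\in\mathbb{R}^K$ is unknown and satisfies the linear restrictions $\mathbf{R}\boldsymbol{\beta}=\mathbf{r}$ with known $\mathbf{R}\in\mathbb{R}^{q\times K}$, $\mathbf{r}\in\mathbb{R}^q$, $E(\mathbf{u})=\mathbf{0}$ and $E(\mathbf{u}\mathbf{u}')=\sigma^2\boldsymbol{\Omega}$, where $\sigma^2>0$ is an unknown scalar and $\boldsymbol{\Omega}$ is a known symmetric nonnegative definite $(T\times T)$ matrix with $\mathrm{tr}(\boldsymbol{\Omega})=T$ and rank $M$ (possibly $M<T$). Write $\boldsymbol{\Omega}=\mathbf{F}\boldsymbol{\Lambda}\mathbf{F}'$, where $\mathbf{F}$ is a $(T\times M)$ matrix with orthonormal columns (eigenvectors of $\boldsymbol{\Omega}$ for its positive eigenvalues) and $\boldsymbol{\Lambda}$ is the $(M\times M)$ diagonal matrix of the positive eigenvalues, so that $\boldsymbol{\Omega}^+=\mathbf{F}\boldsymbol{\Lambda}^{-1}\mathbf{F}'$ is the Moore–Penrose inverse of $\boldsymbol{\Omega}$. Let $\mathbf{A}$ be a $(T\times(T-M))$ matrix with orthonormal columns satisfying $\boldsymbol{\Omega}\mathbf{A}=\mathbf{0}$, and let $\mathbf{g}=\mathbf{A}'\mathbf{X}\boldsymbol{\beta}$ (so that $\mathbf{A}'\mathbf{y}=\mathbf{g}$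 with probability one). Define \[ \mathbf{H}=\begin{pmatrix}\mathbf{R}\\ \mathbf{A}'\mathbf{X}\end{pmatrix},\qquad \mathbf{h}=\begin{pmatrix}\mathbf{r}\\ \mathbf{g}\end{pmatrix},\qquad \mathbf{C}_+=\mathbf{X}'\boldsymbol{\Omega}^+\mathbf{X}, \] let $\mathbf{N}$ be a $(K\times(K-\mathrm{rk}(\mathbf{H})))$ matrix whose columns form an orthonormal basis of the null space of $\mathbf{H}$, and let $\mathbf{S}=\mathbf{N}'\mathbf{C}_+\mathbf{N}$. Assume (i) $\mathrm{rk}(\mathbf{R})=\mathrm{rk}(\mathbf{R},\mathbf{r})$; (ii) the stacked matrix $\begin{pmatrix}\mathbf{R}\\ \mathbf{X}\end{pmatrix}$ has full column rank $K$; (iii) $\mathrm{rk}(\mathbf{H})=\mathrm{rk}(\mathbf{H},\mathbf{h})$. Let $\boldsymbol{\beta}^*\in\mathbb{R}^K$ be an arbitrary vector with $\mathbf{H}\boldsymbol{\beta}^*=\mathbf{h}$. Then $\mathbf{S}$ is invertible and the linear system in $\mathbf{b}\in\mathbb{R}^K$ \[ \mathbf{H}\mathbf{b}=\mathbf{h},\qquad \mathbf{N}'\mathbf{C}_+\mathbf{b}=\mathbf{N}'\mathbf{X}'\boldsymbol{\Omega}^+\mathbf{y} \] has the unique solution \[ \hat{\boldsymbol{\beta}}=\mathbf{N}\mathbf{S}^{-1}\mathbf{N}'\mathbf{X}'\boldsymbol{\Omega}^+\mathbf{y}+(\mathbf{I}_K-\mathbf{N}\mathbf{S}^{-1}\mathbf{N}'\mathbf{C}_+)\boldsymbol{\beta}^*,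 \] and, regarding $\hat{\boldsymbol{\beta}}$ as a random vector through $\mathbf{y}$, $E(\hat{\boldsymbol{\beta}})=\boldsymbol{\beta}$ and $\mathrm{Var}(\hat{\boldsymbol{\beta}})=\sigma^2\mathbf{N}\mathbf{S}^{-1}\mathbf{N}'$.
   Context: $\mathrm{rk}$ denotes matrix rank, $(\mathbf{B},\mathbf{b})$ the matrix obtained by appending the column(s) $\mathbf{b}$ to $\mathbf{B}$, and a stacked matrix $\begin{pmatrix}\mathbf{B}_1\\ \mathbf{B}_2\end{pmatrix}$ is formed by placing the rows of $\mathbf{B}_2$ below those of $\mathbf{B}_1$. The restrictions $\mathbf{H}\boldsymbol{\beta}=\mathbf{h}$ combine the explicit restrictions $\mathbf{R}\boldsymbol{\beta}=\mathbf{r}$ with the implicit restrictions $\mathbf{A}'\mathbf{X}\boldsymbol{\beta}=\mathbf{g}$ induced by the singularity of $\boldsymbol{\Omega}$. $\mathrm{Var}$ denotes the covariance matrix. *)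

theory Defs
  imports "HOL-Probability.Probability" "Jordan_Normal_Form.DL_Rank"
begin

definition rk :: "real mat \<Rightarrow> nat" where
  "rk A = vec_space.rank (dim_row A) A"

definition mtrace :: "real mat \<Rightarrow> real" where
  "mtrace A = (\<Sum>i<dim_row A. A $$ (i, i))"

definition append_col :: "real mat \<Rightarrow> real vec \<Rightarrow> real mat" where
  "append_col B b = mat (dim_row B) (dim_col B + 1)
     (\<lambda>(i, j). if j < dim_col B then B $$ (i, j) else b $ i)"

definition sym_psd :: "real mat \<Rightarrow> bool" where
  "sym_psd A \<longleftrightarrow> A\<^sup>T = A \<and> (\<forall>v \<in> carrier_vec (dim_row A). 0 \<le> v \<bullet> (A *\<^sub>v v))"

definition diag_inv :: "real mat \<Rightarrow> real mat" where
  "diag_inv L = mat (dim_row L) (dim_row L) (\<lambda>(i, j). if i = j then 1 / L $$ (i, i) else 0)"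

text \<open>Moore-Penrose inverse F Lambda^-1 F' built from the spectral factors of Omega.\<close>
definition eig_pinv :: "real mat \<Rightarrow> real mat \<Rightarrow> real mat" where
  "eig_pinv F L = F * diag_inv L * F\<^sup>T"

definition vexp :: "'w measure \<Rightarrow> ('w \<Rightarrow> real vec) \<Rightarrow> nat \<Rightarrow> real vec" where
  "vexp P Z n = vec n (\<lambda>i. integral\<^sup>L P (\<lambda>\<omega>. Z \<omega> $ i))"

definition vsecond :: "'w measure \<Rightarrow> ('w \<Rightarrow> real vec) \<Rightarrow> nat \<Rightarrow> real mat" where
  "vsecond P Z n = mat n n (\<lambda>(i, j). integral\<^sup>L P (\<lambda>\<omega>. Z \<omega> $ i * Z \<omega> $ j))"

definition vcov :: "'w measure \<Rightarrow> ('w \<Rightarrow> real vec) \<Rightarrow> nat \<Rightarrow> real mat" where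
  "vcov P Z n = mat n n (\<lambda>(i, j). integral\<^sup>L P
      (\<lambda>\<omega>. (Z \<omega> $ i - vexp P Z n $ i) * (Z \<omega> $ j - vexp P Z n $ j)))"

end

theory Submission
  imports Defs
begin


lemma (in vec_space) rank_kernel:
  assumes A: "A \<in> carrier_mat n nc" and rk: "rank A = nc"
    and v: "v \<in> carrier_vec nc" and Av: "A *\<^sub>v v = 0\<^sub>v n"
  shows "v = 0\<^sub>v nc"
proof (rule ccontr)
  assume nz: "v \<noteq> 0\<^sub>v nc"
  have dist: "distinct (cols A)"
  proof (rule ccontr)
    assume nd: "\<not> distinct (cols A)"
    obtain S where S: "maximal S (\<lambda>T. T \<subseteq> set (cols A) \<and> lin_indpt T)"
      using maximal_exists[of "(\<lambda>T. T \<subseteq> set (cols A) \<and> lin_indpt T)" "card (set (cols A))" "{}"]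
      by (meson List.finite_set card_mono empty_iff empty_subsetI finite_lin_indpt2 rev_finite_subset)
    then have "card S \<le> card (set (cols A))" by (simp add: card_mono maximal_def)
    then have "card S < nc"
      using A cols_length card_length nd card_distinct carrier_matD(2) nat_less_le
      by (metis dual_order.antisym dual_order.trans)
    then show False using rank_card_indpt[OF A S] rk by simp
  qed
  have "lin_indpt (set (cols A))"
    using full_rank_lin_indpt[OF A rk dist] .
  moreover have "lin_dep (set (cols A))"
    using lin_depI[OF A v nz Av dist] .
  ultimately show False by simp
qed

lemma append_zero:
  fixes a b :: "real vec"
  assumes "a \<in> carrier_vec n1" "b \<in> carrier_vec n2" "a @\<^sub>v b = 0\<^sub>v (n1 + n2)"
  shows "a = 0\<^sub>v n1 \<and> b = 0\<^sub>v n2"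
proof -
  have "0\<^sub>v (n1 + n2) = (0\<^sub>v n1 :: real vec) @\<^sub>v 0\<^sub>v n2"
    by (rule eq_vecI) (auto simp: append_vec_def)
  with assms show ?thesis by (simp add: append_vec_eq)
qed

lemma ifz: "(if P then c else 0) * x = (if P then c * x else (0::real))"
  "x * (if P then c else 0) = (if P then x * c else (0::real))" by auto

lemma diag_inv_mult:
  assumes L: "L \<in> carrier_mat M M" and d: "diagonal_mat L" and p: "\<forall>i<M. 0 < L $$ (i, i)"
  shows "diag_inv L * L = 1\<^sub>m M" "L * diag_inv L = 1\<^sub>m M" "(diag_inv L)\<^sup>T = diag_inv L"
    "diag_inv L \<in> carrier_mat M M"
proof -
  have Lij: "\<And>i j. i < M \<Longrightarrow> j < M \<Longrightarrow> i \<noteq> j \<Longrightarrow> L $$ (i,j) = 0"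
    using d L unfolding diagonal_mat_def by auto
  show "diag_inv L \<in> carrier_mat M M" using L by (simp add: diag_inv_def)
  show "diag_inv L * L = 1\<^sub>m M"
  proof (rule eq_matI)
    fix i j assume i: "i < dim_row (1\<^sub>m M)" and j: "j < dim_col (1\<^sub>m M)"
    have "(diag_inv L * L) $$ (i,j) = (\<Sum>k\<in>{0..<M}. (if i = k then 1 / L $$ (i,i) else 0) * L $$ (k,j))"
      using i j L by (simp add: diag_inv_def scalar_prod_def)
    also have "\<dots> = L $$ (i,j) / L $$ (i,i)" using i by (simp add: ifz sum.delta sum.delta')
    also have "\<dots> = 1\<^sub>m M $$ (i,j)" using i j p Lij[of i j] by (cases "i = j") auto
    finally show "(diag_inv L * L) $$ (i,j) = 1\<^sub>m M $$ (i,j)" .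
  qed (use L in \<open>auto simp: diag_inv_def\<close>)
  show "L * diag_inv L = 1\<^sub>m M"
  proof (rule eq_matI)
    fix i j assume i: "i < dim_row (1\<^sub>m M)" and j: "j < dim_col (1\<^sub>m M)"
    have "(L * diag_inv L) $$ (i,j) = (\<Sum>k\<in>{0..<M}. L $$ (i,k) * (if k = j then 1 / L $$ (k,k) else 0))"
      using i j L by (simp add: diag_inv_def scalar_prod_def)
    also have "\<dots> = L $$ (i,j) / L $$ (j,j)" using j by (simp add: ifz sum.delta sum.delta')
    also have "\<dots> = 1\<^sub>m M $$ (i,j)" using i j p Lij[of i j] by (cases "i = j") auto
    finally show "(L * diag_inv L) $$ (i,j) = 1\<^sub>m M $$ (i,j)" .
  qed (use L in \<open>auto simp: diag_inv_def\<close>)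
  show "(diag_inv L)\<^sup>T = diag_inv L"
    by (rule eq_matI) (auto simp: diag_inv_def)
qed

lemma diag_inv_quad:
  assumes L: "L \<in> carrier_mat M M" and p: "\<forall>i<M. 0 < L $$ (i, i)"
    and w: "w \<in> carrier_vec M" and z: "w \<bullet> (diag_inv L *\<^sub>v w) = 0"
  shows "w = 0\<^sub>v M"
proof -
  have "w \<bullet> (diag_inv L *\<^sub>v w) = (\<Sum>i\<in>{0..<M}. w $ i * (w $ i / L $$ (i,i)))"
  proof -
    have di: "\<And>i. i \<in> {0..<M} \<Longrightarrow> w $ i * (diag_inv L *\<^sub>v w) $ i = w $ i * (w $ i / L $$ (i,i))"
      using L w by (simp add: diag_inv_def mult_mat_vec_def scalar_prod_def row_def ifz sum.delta sum.delta')
    have dm: "dim_vec (diag_inv L *\<^sub>v w) = M" using L by (simp add: diag_inv_def)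
    have "w \<bullet> (diag_inv L *\<^sub>v w) = (\<Sum>i\<in>{0..<dim_vec (diag_inv L *\<^sub>v w)}. w $ i * (diag_inv L *\<^sub>v w) $ i)"
      by (simp only: scalar_prod_def)
    also have "\<dots> = (\<Sum>i\<in>{0..<M}. w $ i * (w $ i / L $$ (i,i)))"
      unfolding dm by (rule sum.cong) (auto simp only: di)
    finally show ?thesis .
  qed
  with z have s: "(\<Sum>i\<in>{0..<M}. w $ i * (w $ i / L $$ (i,i))) = 0" by simp
  have nn: "\<And>i. i\<in>{0..<M} \<Longrightarrow> 0 \<le> w $ i * (w $ i / L $$ (i,i))"
    using p by (auto intro!: divide_nonneg_pos simp: mult_nonneg_nonneg)
  have "\<forall>i\<in>{0..<M}. w $ i * (w $ i / L $$ (i,i)) = 0"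
    using sum_nonneg_eq_0_iff[of "{0..<M}", OF _ nn] s by simp
  then have "\<forall>i<M. w $ i = 0" using p by (metis atLeastLessThan_iff less_irrefl zero_le divide_eq_0_iff mult_eq_0_iff)
  then show ?thesis using w by (intro eq_vecI) auto
qed

lemma mat_zero_vec[simp]: "A \<in> carrier_mat nr nc \<Longrightarrow> A *\<^sub>v 0\<^sub>v nc = (0\<^sub>v nr :: real vec)"
  by (rule eq_vecI) auto

lemma zero_mat_vec[simp]: "v \<in> carrier_vec nc \<Longrightarrow> 0\<^sub>m nr nc *\<^sub>v v = (0\<^sub>v nr :: real vec)"
  by (rule eq_vecI) auto

lemma orth_complete:
  fixes F A :: "real mat"
  assumes F: "F \<in> carrier_mat T M" and A: "A \<in> carrier_mat T (T - M)" and MT: "M \<le> T"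
    and FF: "F\<^sup>T * F = 1\<^sub>m M" and AA: "A\<^sup>T * A = 1\<^sub>m (T - M)" and FA: "F\<^sup>T * A = 0\<^sub>m M (T - M)"
    and w: "w \<in> carrier_vec T" and Fw: "F\<^sup>T *\<^sub>v w = 0\<^sub>v M" and Aw: "A\<^sup>T *\<^sub>v w = 0\<^sub>v (T - M)"
  shows "w = 0\<^sub>v T"
proof -
  define Q where "Q = mat T T (\<lambda>(i,j). if j < M then F $$ (i,j) else A $$ (i,j-M))"
  have Q: "Q \<in> carrier_mat T T" "Q\<^sup>T \<in> carrier_mat T T" unfolding Q_def by auto
  have colQ: "\<And>j. j < T \<Longrightarrow> col Q j = (if j < M then col F j else col A (j - M))"
    by (rule eq_vecI) (use F A in \<open>auto simp: Q_def\<close>)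
  have ff: "\<And>i j. i < M \<Longrightarrow> j < M \<Longrightarrow> col F i \<bullet> col F j = (if i = j then 1 else 0)"
  proof -
    fix i j assume "i < M" "j < M"
    then have "(F\<^sup>T * F) $$ (i,j) = col F i \<bullet> col F j" using F by simp
    then show "col F i \<bullet> col F j = (if i = j then 1 else 0)" using FF \<open>i < M\<close> \<open>j < M\<close> by simp
  qed
  have aa: "\<And>i j. i < T - M \<Longrightarrow> j < T - M \<Longrightarrow> col A i \<bullet> col A j = (if i = j then 1 else 0)"
  proof -
    fix i j assume "i < T - M" "j < T - M"
    then have "(A\<^sup>T * A) $$ (i,j) = col A i \<bullet> col A j" using A by simp
    then show "col A i \<bullet> col A j = (if i = j then 1 else 0)" using AA \<open>i < T - M\<close> \<open>j < T - M\<close> by simp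
  qed
  have fa: "\<And>i j. i < M \<Longrightarrow> j < T - M \<Longrightarrow> col F i \<bullet> col A j = 0"
  proof -
    fix i j assume "i < M" "j < T - M"
    then have "(F\<^sup>T * A) $$ (i,j) = col F i \<bullet> col A j" using A F by simp
    then show "col F i \<bullet> col A j = 0" using FA \<open>i < M\<close> \<open>j < T - M\<close> by simp
  qed
  have af: "\<And>i j. i < M \<Longrightarrow> j < T - M \<Longrightarrow> col A j \<bullet> col F i = 0"
    using fa comm_scalar_prod[of "col A _" T "col F _"] F A by (metis col_carrier_vec carrier_matD)
  have QQ: "Q\<^sup>T * Q = 1\<^sub>m T"
  proof (rule eq_matI)
    fix i j assume i: "i < dim_row (1\<^sub>m T)" and j: "j < dim_col (1\<^sub>m T)"
    then have "(Q\<^sup>T * Q) $$ (i,j) = col Q i \<bullet> col Q j" using Q by simp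
    also have "\<dots> = 1\<^sub>m T $$ (i,j)"
      using i j MT by (auto simp: colQ ff aa fa af)
    finally show "(Q\<^sup>T * Q) $$ (i,j) = 1\<^sub>m T $$ (i,j)" .
  qed (use Q in auto)
  have QQ2: "Q * Q\<^sup>T = 1\<^sub>m T" using mat_mult_left_right_inverse[OF Q(2) Q(1) QQ] .
  have Qw: "Q\<^sup>T *\<^sub>v w = 0\<^sub>v T"
  proof (rule eq_vecI)
    fix i assume i: "i < dim_vec (0\<^sub>v T :: real vec)"
    then have "(Q\<^sup>T *\<^sub>v w) $ i = col Q i \<bullet> w" using Q by simp
    also have "\<dots> = 0"
    proof (cases "i < M")
      case True
      then have "(F\<^sup>T *\<^sub>v w) $ i = col F i \<bullet> w" using F by simp
      then show ?thesis using True i Fw colQ by simp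
    next
      case False
      then have "(A\<^sup>T *\<^sub>v w) $ (i - M) = col A (i - M) \<bullet> w" using A i by simp
      then show ?thesis using False i Aw colQ by simp
    qed
    finally show "(Q\<^sup>T *\<^sub>v w) $ i = 0\<^sub>v T $ i" using i by simp
  qed (use Q in auto)
  have "w = (Q * Q\<^sup>T) *\<^sub>v w" using QQ2 w by simp
  also have "\<dots> = Q *\<^sub>v (Q\<^sup>T *\<^sub>v w)" using Q w by simp
  also have "\<dots> = 0\<^sub>v T" using Qw Q by simp
  finally show ?thesis .
qed



lemma assoc_dim: "dim_col (A::real mat) = dim_row B \<Longrightarrow> dim_col B = dim_row C \<Longrightarrow> A * B * C = A * (B * C)"
  by (rule assoc_mult_mat[of A "dim_row A" "dim_col A" B "dim_col B" C "dim_col C"]) auto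
lemma assoc_dim_vec: "dim_col (A::real mat) = dim_row B \<Longrightarrow> dim_col B = dim_vec v \<Longrightarrow> (A * B) *\<^sub>v v = A *\<^sub>v (B *\<^sub>v v)"
  by (rule assoc_mult_mat_vec[of A "dim_row A" "dim_col A" B "dim_col B"]) auto
lemma one_left_dim: "dim_row (A::real mat) = n \<Longrightarrow> 1\<^sub>m n * A = A"
  by (rule left_mult_one_mat[of A n "dim_col A"]) auto
lemma one_right_dim: "dim_col (A::real mat) = n \<Longrightarrow> A * 1\<^sub>m n = A"
  by (rule right_mult_one_mat[of A "dim_row A" n]) auto
lemma one_vec_dim: "dim_vec (v::real vec) = n \<Longrightarrow> 1\<^sub>m n *\<^sub>v v = v"
  by (rule one_mult_mat_vec[of v n]) auto
lemmas dsimps = assoc_dim assoc_dim_vec one_left_dim one_right_dim one_vec_dim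


lemma transpose3:
  fixes A B C :: "real mat"
  assumes "A \<in> carrier_mat nr n1" "B \<in> carrier_mat n1 n2" "C \<in> carrier_mat n2 nc"
  shows "(A * B * C)\<^sup>T = C\<^sup>T * B\<^sup>T * A\<^sup>T"
proof -
  have "(A * B * C)\<^sup>T = C\<^sup>T * (A * B)\<^sup>T"
    using transpose_mult[of "A * B" nr n2 C nc] assms by simp
  also have "\<dots> = C\<^sup>T * (B\<^sup>T * A\<^sup>T)" using transpose_mult[of A nr n1 B n2] assms by simp
  also have "\<dots> = C\<^sup>T * B\<^sup>T * A\<^sup>T" using assms by simp
  finally show ?thesis .
qed

theorem theorem3:
  fixes T K q M :: nat
    and X R F \<Lambda> \<Omega> A N :: "real mat"
    and \<beta> r \<beta>s :: "real vec"
    and \<sigma>2 :: real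
    and P :: "'w measure"
    and y :: "'w \<Rightarrow> real vec"
  defines "u \<equiv> (\<lambda>\<omega>. y \<omega> - X *\<^sub>v \<beta>)"
    and "H \<equiv> R @\<^sub>r (A\<^sup>T * X)"
    and "h \<equiv> r @\<^sub>v (A\<^sup>T * X *\<^sub>v \<beta>)"
    and "S \<equiv> N\<^sup>T * (X\<^sup>T * eig_pinv F \<Lambda> * X) * N"
  assumes "0 < K" and "K < T"
    and X: "X \<in> carrier_mat T K"
    and R: "R \<in> carrier_mat q K" and r: "r \<in> carrier_vec q"
    and \<beta>: "\<beta> \<in> carrier_vec K" and R\<beta>: "R *\<^sub>v \<beta> = r"
    and sig: "0 < \<sigma>2"
    and \<Omega>: "\<Omega> \<in> carrier_mat T T" and "sym_psd \<Omega>" and "mtrace \<Omega> = real T" and "rk \<Omega> = M"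
    and F: "F \<in> carrier_mat T M" and "F\<^sup>T * F = 1\<^sub>m M"
    and \<Lambda>: "\<Lambda> \<in> carrier_mat M M" and "diagonal_mat \<Lambda>" and "\<forall>i<M. 0 < \<Lambda> $$ (i, i)"
    and "\<Omega> = F * \<Lambda> * F\<^sup>T"
    and A: "A \<in> carrier_mat T (T - M)" and "A\<^sup>T * A = 1\<^sub>m (T - M)" and "\<Omega> * A = 0\<^sub>m T (T - M)"
    and N: "N \<in> carrier_mat K (K - rk H)" and "N\<^sup>T * N = 1\<^sub>m (K - rk H)"
    and "H * N = 0\<^sub>m (dim_row H) (K - rk H)"
    and "\<forall>v \<in> carrier_vec K. H *\<^sub>v v = 0\<^sub>v (dim_row H) \<longrightarrow>
           (\<exists>c \<in> carrier_vec (K - rk H). v = N *\<^sub>v c)"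
    and i: "rk R = rk (append_col R r)"
    and ii: "rk (R @\<^sub>r X) = K"
    and iii: "rk H = rk (append_col H h)"
    and \<beta>s: "\<beta>s \<in> carrier_vec K" and "H *\<^sub>v \<beta>s = h"
    and P: "prob_space P"
    and y: "\<forall>\<omega> \<in> space P. y \<omega> \<in> carrier_vec T"
    and "\<forall>i<T. integrable P (\<lambda>\<omega>. y \<omega> $ i)"
    and "\<forall>i<T. \<forall>j<T. integrable P (\<lambda>\<omega>. u \<omega> $ i * u \<omega> $ j)"
    and Eu: "vexp P u T = 0\<^sub>v T"
    and Euu: "vsecond P u T = \<sigma>2 \<cdot>\<^sub>m \<Omega>"
  shows "invertible_mat S \<and>
    (\<forall>Si. Si \<in> carrier_mat (K - rk H) (K - rk H) \<and> S * Si = 1\<^sub>m (K - rk H)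
            \<and> Si * S = 1\<^sub>m (K - rk H) \<longrightarrow>
      (let bhat = (\<lambda>\<omega>. N * Si * N\<^sup>T * X\<^sup>T * eig_pinv F \<Lambda> *\<^sub>v y \<omega>
                        + (1\<^sub>m K - N * Si * N\<^sup>T * (X\<^sup>T * eig_pinv F \<Lambda> * X)) *\<^sub>v \<beta>s)
       in (\<forall>\<omega> \<in> space P.
             H *\<^sub>v bhat \<omega> = h \<and> N\<^sup>T * (X\<^sup>T * eig_pinv F \<Lambda> * X) *\<^sub>v bhat \<omega> = N\<^sup>T * X\<^sup>T * eig_pinv F \<Lambda> *\<^sub>v y \<omega> \<and>
             (\<forall>b \<in> carrier_vec K. H *\<^sub>v b = h \<and> N\<^sup>T * (X\<^sup>T * eig_pinv F \<Lambda> * X) *\<^sub>v b = N\<^sup>T * X\<^sup>T * eig_pinv F \<Lambda> *\<^sub>v y \<omega>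
                 \<longrightarrow> b = bhat \<omega>))
          \<and> vexp P bhat K = \<beta>
          \<and> vcov P bhat K = \<sigma>2 \<cdot>\<^sub>m (N * Si * N\<^sup>T)))"
proof -
  have HD: "H \<equiv> R @\<^sub>r (A\<^sup>T * X)" by fact
  have hD: "h \<equiv> r @\<^sub>v (A\<^sup>T * X *\<^sub>v \<beta>)" by fact
  have SD: "S \<equiv> N\<^sup>T * (X\<^sup>T * eig_pinv F \<Lambda> * X) * N" by fact
  have uD: "u \<equiv> (\<lambda>\<omega>. y \<omega> - X *\<^sub>v \<beta>)" by fact
  have FF: "F\<^sup>T * F = 1\<^sub>m M" by fact
  have AA: "A\<^sup>T * A = 1\<^sub>m (T - M)" by fact
  have OA: "\<Omega> * A = 0\<^sub>m T (T - M)" by fact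
  have OmF: "\<Omega> = F * \<Lambda> * F\<^sup>T" by fact
  have rkO: "rk \<Omega> = M" by fact
  have dL: "diagonal_mat \<Lambda>" by fact
  have pL: "\<forall>i<M. 0 < \<Lambda> $$ (i, i)" by fact
  have NN: "N\<^sup>T * N = 1\<^sub>m (K - rk H)" by fact
  have HN: "H * N = 0\<^sub>m (dim_row H) (K - rk H)" by fact
  have kerH: "\<forall>v \<in> carrier_vec K. H *\<^sub>v v = 0\<^sub>v (dim_row H) \<longrightarrow>
           (\<exists>c \<in> carrier_vec (K - rk H). v = N *\<^sub>v c)" by fact
  have Hbs: "H *\<^sub>v \<beta>s = h" by fact
  have inty: "\<forall>i<T. integrable P (\<lambda>\<omega>. y \<omega> $ i)" by fact
  have intuu: "\<forall>i<T. \<forall>j<T. integrable P (\<lambda>\<omega>. u \<omega> $ i * u \<omega> $ j)" by fact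
  define k where "k = K - rk H"
  define Li where "Li = diag_inv \<Lambda>"
  define Pi where "Pi = eig_pinv F \<Lambda>"
  define C where "C = X\<^sup>T * Pi * X"
  define nH where "nH = q + (T - M)"
  note Lm = diag_inv_mult[OF \<Lambda> dL pL, folded Li_def]
  have Li: "Li \<in> carrier_mat M M" using Lm by simp
  have MT: "M \<le> T"
    using vec_space.rank_le_nc[OF \<Omega>] rkO \<Omega> unfolding rk_def by simp
  have Pi: "Pi \<in> carrier_mat T T" unfolding Pi_def eig_pinv_def Li_def[symmetric] using F Li by simp
  have PiF: "Pi = F * Li * F\<^sup>T" unfolding Pi_def eig_pinv_def Li_def ..
  have Hc: "H \<in> carrier_mat nH K" unfolding HD nH_def using R A X by auto
  have dH: "dim_row H = nH" using Hc by simp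
  have hc: "h \<in> carrier_vec nH" unfolding hD nH_def using r A X \<beta> by auto
  have Nc: "N \<in> carrier_mat K k" using N unfolding k_def .
  have Cc: "C \<in> carrier_mat K K" unfolding C_def using X Pi by simp
  have Sc: "S \<in> carrier_mat k k" unfolding SD Pi_def[symmetric] C_def[symmetric] using Nc Cc by simp
  have SC: "S = N\<^sup>T * C * N" unfolding SD Pi_def[symmetric] C_def[symmetric] ..
  note dims = carrier_matD[OF X] carrier_matD[OF R] carrier_matD[OF F] carrier_matD[OF \<Lambda>]
    carrier_matD[OF A] carrier_matD[OF Nc] carrier_matD[OF Cc] carrier_matD[OF Sc] carrier_matD[OF Pi]
    carrier_matD[OF Li] carrier_matD[OF Hc] carrier_vecD[OF r] carrier_vecD[OF \<beta>] carrier_vecD[OF \<beta>s]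
    carrier_vecD[OF hc] carrier_matD[OF \<Omega>]
  have PiT: "Pi\<^sup>T = Pi" unfolding PiF using F Li Lm(3) transpose3[OF F Li, of "F\<^sup>T" T] by simp
  have CT: "C\<^sup>T = C" unfolding C_def using X Pi PiT transpose3[of "X\<^sup>T" K T Pi T X K] by simp
  have ST: "S\<^sup>T = S" unfolding SC using Nc Cc CT transpose3[of "N\<^sup>T" k K C K N k] by simp
  have FA: "F\<^sup>T * A = 0\<^sub>m M (T - M)"
  proof -
    have "F\<^sup>T * (\<Omega> * A) = (F\<^sup>T * F) * (\<Lambda> * (F\<^sup>T * A))"
      unfolding OmF by (simp add: dsimps dims)
    also have "\<dots> = \<Lambda> * (F\<^sup>T * A)" unfolding FF by (simp add: dsimps dims)
    finally have e: "\<Lambda> * (F\<^sup>T * A) = 0\<^sub>m M (T - M)" using OA F by simp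
    have "F\<^sup>T * A = (Li * \<Lambda>) * (F\<^sup>T * A)" unfolding Lm by (simp add: dsimps dims)
    also have "\<dots> = Li * (\<Lambda> * (F\<^sup>T * A))" by (simp add: dsimps dims)
    also have "\<dots> = 0\<^sub>m M (T - M)" unfolding e using Li by simp
    finally show ?thesis .
  qed
  have POP: "Pi * \<Omega> * Pi = Pi"
  proof -
    have "Pi * \<Omega> * Pi = F * (Li * ((F\<^sup>T * F) * (\<Lambda> * ((F\<^sup>T * F) * (Li * F\<^sup>T)))))"
      unfolding PiF OmF by (simp add: dsimps dims)
    also have "\<dots> = F * (Li * (\<Lambda> * (Li * F\<^sup>T)))" unfolding FF by (simp add: dsimps dims)
    also have "\<dots> = F * ((Li * \<Lambda>) * (Li * F\<^sup>T))" by (simp add: dsimps dims)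
    also have "\<dots> = Pi" unfolding PiF Lm(1) by (simp add: dsimps dims)
    finally show ?thesis .
  qed
  have kerS: "\<And>c. c \<in> carrier_vec k \<Longrightarrow> S *\<^sub>v c = 0\<^sub>v k \<Longrightarrow> c = 0\<^sub>v k"
  proof -
    fix c :: "real vec" assume c: "c \<in> carrier_vec k" and Sc0: "S *\<^sub>v c = 0\<^sub>v k"
    define z where "z = N *\<^sub>v c"
    define w where "w = X *\<^sub>v z"
    define f where "f = F\<^sup>T *\<^sub>v w"
    define g where "g = Li *\<^sub>v f"
    have z: "z \<in> carrier_vec K" unfolding z_def using Nc c by simp
    have w: "w \<in> carrier_vec T" unfolding w_def using X z by simp
    have f: "f \<in> carrier_vec M" unfolding f_def using F w by simp
    have g: "g \<in> carrier_vec M" unfolding g_def using Li f by simp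
    have Fg: "F *\<^sub>v g \<in> carrier_vec T" using F g by simp
    have XFg: "X\<^sup>T *\<^sub>v (F *\<^sub>v g) \<in> carrier_vec K" using X Fg by simp
    have "S *\<^sub>v c = N\<^sup>T *\<^sub>v (X\<^sup>T *\<^sub>v (F *\<^sub>v g))"
      unfolding SC C_def PiF g_def f_def w_def z_def using c by (simp add: dsimps dims)
    then have e0: "N\<^sup>T *\<^sub>v (X\<^sup>T *\<^sub>v (F *\<^sub>v g)) = 0\<^sub>v k" using Sc0 by simp
    have "0 = c \<bullet> (N\<^sup>T *\<^sub>v (X\<^sup>T *\<^sub>v (F *\<^sub>v g)))" unfolding e0 using c by simp
    also have "\<dots> = (N\<^sup>T *\<^sub>v (X\<^sup>T *\<^sub>v (F *\<^sub>v g))) \<bullet> c"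
      using c Nc XFg by (intro comm_scalar_prod[of _ k]) auto
    also have "\<dots> = (X\<^sup>T *\<^sub>v (F *\<^sub>v g)) \<bullet> z"
      unfolding z_def using transpose_vec_mult_scalar[OF Nc c XFg] .
    also have "\<dots> = (F *\<^sub>v g) \<bullet> w"
      unfolding w_def using transpose_vec_mult_scalar[OF X z Fg] .
    also have "\<dots> = w \<bullet> (F *\<^sub>v g)" using w Fg by (intro comm_scalar_prod[of _ T]) auto
    also have "\<dots> = f \<bullet> g"
      unfolding f_def using transpose_vec_mult_scalar[OF F g w] by simp
    finally have "f \<bullet> (Li *\<^sub>v f) = 0" unfolding g_def by simp
    then have f0: "f = 0\<^sub>v M" using diag_inv_quad[OF \<Lambda> pL f] unfolding Li_def by simp
    have "H *\<^sub>v z = (H * N) *\<^sub>v c" unfolding z_def using c by (simp add: dsimps dims)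
    also have "\<dots> = 0\<^sub>v nH" unfolding HN dH using c by (simp add: k_def)
    finally have Hz: "H *\<^sub>v z = 0\<^sub>v nH" .
    have "H *\<^sub>v z = (R *\<^sub>v z) @\<^sub>v ((A\<^sup>T * X) *\<^sub>v z)"
      unfolding HD using mat_mult_append[of R q K "A\<^sup>T * X" "T - M" z] R A X z by simp
    then have "R *\<^sub>v z = 0\<^sub>v q \<and> (A\<^sup>T * X) *\<^sub>v z = 0\<^sub>v (T - M)"
      using Hz append_zero[of "R *\<^sub>v z" q "(A\<^sup>T * X) *\<^sub>v z" "T - M"] R A X z unfolding nH_def by simp
    then have Rz: "R *\<^sub>v z = 0\<^sub>v q" and Aw: "A\<^sup>T *\<^sub>v w = 0\<^sub>v (T - M)"
      unfolding w_def using A X z by auto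
    have w0: "w = 0\<^sub>v T" using orth_complete[OF F A MT FF AA FA w] f0 Aw unfolding f_def by simp
    have "(R @\<^sub>r X) *\<^sub>v z = (R *\<^sub>v z) @\<^sub>v (X *\<^sub>v z)"
      using mat_mult_append[of R q K X T z] R X z by simp
    also have "\<dots> = 0\<^sub>v (q + T)" unfolding Rz w_def[symmetric] w0
      by (rule eq_vecI) (auto simp: append_vec_def)
    finally have RXz: "(R @\<^sub>r X) *\<^sub>v z = 0\<^sub>v (q + T)" .
    have RXc: "R @\<^sub>r X \<in> carrier_mat (q + T) K" using R X by auto
    have "vec_space.rank (q + T) (R @\<^sub>r X) = K" using ii RXc unfolding rk_def by simp
    then have z0: "z = 0\<^sub>v K" using vec_space.rank_kernel[OF RXc _ z RXz] by simp
    have "c = (N\<^sup>T * N) *\<^sub>v c" using NN c unfolding k_def by simp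
    also have "\<dots> = N\<^sup>T *\<^sub>v z" unfolding z_def using c by (simp add: dsimps dims)
    also have "\<dots> = 0\<^sub>v k" unfolding z0 using Nc by simp
    finally show "c = 0\<^sub>v k" .
  qed
  have invS: "invertible_mat S"
  proof -
    have "det S \<noteq> 0" using det_0_iff_vec_prod_zero_field[OF Sc] kerS by auto
    from det_non_zero_imp_unit[OF Sc this, of undefined]
    obtain B where B: "B \<in> carrier_mat k k" "B * S = 1\<^sub>m k" "S * B = 1\<^sub>m k"
      unfolding Units_def ring_mat_def by auto
    then show ?thesis using Sc unfolding invertible_mat_def inverts_mat_def square_mat.simps by auto
  qed
  interpret p: prob_space P by (rule P)
  have Eu0: "\<And>l. l < T \<Longrightarrow> integral\<^sup>L P (\<lambda>\<omega>. u \<omega> $ l) = 0"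
  proof -
    fix l assume l: "l < T"
    have "vexp P u T $ l = 0\<^sub>v T $ l" using Eu by simp
    then show "integral\<^sup>L P (\<lambda>\<omega>. u \<omega> $ l) = 0" using l by (simp add: vexp_def)
  qed
  have Euu0: "\<And>l m. l < T \<Longrightarrow> m < T \<Longrightarrow> integral\<^sup>L P (\<lambda>\<omega>. u \<omega> $ l * u \<omega> $ m) = \<sigma>2 * \<Omega> $$ (l, m)"
  proof -
    fix l m assume l: "l < T" and m: "m < T"
    have "vsecond P u T $$ (l, m) = (\<sigma>2 \<cdot>\<^sub>m \<Omega>) $$ (l, m)" using Euu by simp
    then show "integral\<^sup>L P (\<lambda>\<omega>. u \<omega> $ l * u \<omega> $ m) = \<sigma>2 * \<Omega> $$ (l, m)"
      using l m \<Omega> by (simp add: vsecond_def)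
  qed
  have dimu: "\<And>\<omega>. dim_vec (u \<omega>) = T" unfolding uD using X \<beta> by simp
  have intu: "\<And>l. l < T \<Longrightarrow> integrable P (\<lambda>\<omega>. u \<omega> $ l)"
  proof -
    fix l assume l: "l < T"
    have "(\<lambda>\<omega>. u \<omega> $ l) = (\<lambda>\<omega>. y \<omega> $ l - (X *\<^sub>v \<beta>) $ l)"
      unfolding uD using l X by auto
    moreover have "integrable P (\<lambda>\<omega>. y \<omega> $ l - (X *\<^sub>v \<beta>) $ l)"
      using inty l by (intro Bochner_Integration.integrable_diff p.integrable_const) auto
    ultimately show "integrable P (\<lambda>\<omega>. u \<omega> $ l)" by simp
  qed
  have Hbeta: "H *\<^sub>v \<beta> = h"
    unfolding HD hD using mat_mult_append[of R q K "A\<^sup>T * X" "T - M" \<beta>] R A X \<beta> R\<beta> by simp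
  show ?thesis
  proof (intro conjI allI impI)
    show "invertible_mat S" by (rule invS)
    fix Si assume "Si \<in> carrier_mat (K - rk H) (K - rk H) \<and> S * Si = 1\<^sub>m (K - rk H) \<and> Si * S = 1\<^sub>m (K - rk H)"
    then have Sic: "Si \<in> carrier_mat k k" and SSi: "S * Si = 1\<^sub>m k" and SiS: "Si * S = 1\<^sub>m k"
      unfolding k_def by auto
    define G where "G = N * Si * N\<^sup>T * X\<^sup>T * Pi"
    define D where "D = N * Si * N\<^sup>T * C"
    define W where "W = N * Si * N\<^sup>T"
    note dims2 = dims carrier_matD[OF Sic]
    have Gc: "G \<in> carrier_mat K T" unfolding G_def using Nc Sic X Pi by auto
    have Dc: "D \<in> carrier_mat K K" unfolding D_def using Nc Sic Cc by auto
    have Wc: "W \<in> carrier_mat K K" unfolding W_def using Nc Sic by auto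
    note dims3 = dims2 carrier_matD[OF Gc] carrier_matD[OF Dc] carrier_matD[OF Wc]
    have HNk: "H * N = 0\<^sub>m nH k" using HN unfolding dH k_def .
    have HG: "H * G = 0\<^sub>m nH T"
    proof -
      have "H * G = (H * N) * (Si * (N\<^sup>T * (X\<^sup>T * Pi)))" unfolding G_def by (simp add: dsimps dims2)
      then show ?thesis unfolding HNk using Sic Nc X Pi by simp
    qed
    have HDz: "H * D = 0\<^sub>m nH K"
    proof -
      have "H * D = (H * N) * (Si * (N\<^sup>T * C))" unfolding D_def by (simp add: dsimps dims2)
      then show ?thesis unfolding HNk using Sic Nc Cc by simp
    qed
    have NCG: "N\<^sup>T * C * G = N\<^sup>T * X\<^sup>T * Pi"
    proof -
      have "N\<^sup>T * C * G = (S * Si) * (N\<^sup>T * X\<^sup>T * Pi)" unfolding SC G_def by (simp add: dsimps dims2)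
      then show ?thesis unfolding SSi by (simp add: dsimps dims2)
    qed
    have NCD: "N\<^sup>T * C * D = N\<^sup>T * C"
    proof -
      have "N\<^sup>T * C * D = (S * Si) * (N\<^sup>T * C)" unfolding SC D_def by (simp add: dsimps dims2)
      then show ?thesis unfolding SSi by (simp add: dsimps dims2)
    qed
    have DN: "D * N = N"
    proof -
      have "D * N = N * (Si * S)" unfolding SC D_def by (simp add: dsimps dims2)
      then show ?thesis unfolding SiS by (simp add: dsimps dims2)
    qed
    have GX: "G * X = D" unfolding G_def D_def C_def by (simp add: dsimps dims2)
    have SiT: "Si\<^sup>T = Si"
    proof -
      have "Si\<^sup>T * S = (S * Si)\<^sup>T" using transpose_mult[OF Sc Sic] ST by simp
      then have SiTS: "Si\<^sup>T * S = 1\<^sub>m k" unfolding SSi by simp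
      have "Si\<^sup>T = Si\<^sup>T * (S * Si)" unfolding SSi by (simp add: dsimps dims2)
      also have "\<dots> = (Si\<^sup>T * S) * Si" by (simp add: dsimps dims2)
      also have "\<dots> = Si" unfolding SiTS by (simp add: dsimps dims2)
      finally show ?thesis .
    qed
    have WT: "W\<^sup>T = W" unfolding W_def using transpose3[of "N" K k Si k "N\<^sup>T" K] Nc Sic SiT by simp
    have GW: "G = W * (X\<^sup>T * Pi)" unfolding G_def W_def by (simp add: dsimps dims2)
    have GT: "G\<^sup>T = Pi * X * W"
    proof -
      have "G\<^sup>T = (X\<^sup>T * Pi)\<^sup>T * W\<^sup>T" unfolding GW using transpose_mult[of W K K "X\<^sup>T * Pi" T] Wc X Pi by simp
      also have "(X\<^sup>T * Pi)\<^sup>T = Pi\<^sup>T * X" using transpose_mult[of "X\<^sup>T" K T Pi T] X Pi by simp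
      finally show ?thesis unfolding WT PiT by (simp add: dsimps dims2)
    qed
    have GOG: "G * \<Omega> * G\<^sup>T = W"
    proof -
      have "G * \<Omega> * G\<^sup>T = W * (X\<^sup>T * (Pi * \<Omega> * Pi) * X) * W" unfolding GT unfolding GW by (simp add: dsimps dims3)
      also have "\<dots> = N * (Si * ((N\<^sup>T * C * N) * (Si * N\<^sup>T)))" unfolding POP W_def C_def by (simp add: dsimps dims2)
      also have "\<dots> = N * (Si * ((S * Si) * N\<^sup>T))" unfolding SC[symmetric] by (simp add: dsimps dims2)
      also have "\<dots> = W" unfolding SSi W_def by (simp add: dsimps dims2)
      finally show ?thesis .
    qed
    define bhat where "bhat = (\<lambda>\<omega>. G *\<^sub>v y \<omega> + (1\<^sub>m K - D) *\<^sub>v \<beta>s)"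
    have B1: "(1\<^sub>m K - D) *\<^sub>v \<beta>s = \<beta>s - D *\<^sub>v \<beta>s"
      using minus_mult_distrib_mat_vec[of "1\<^sub>m K" K K D \<beta>s] Dc \<beta>s by simp
    have bh: "\<And>\<omega>. bhat \<omega> = G *\<^sub>v y \<omega> + (\<beta>s - D *\<^sub>v \<beta>s)" unfolding bhat_def B1 ..
    have bhc: "\<And>\<omega>. \<omega> \<in> space P \<Longrightarrow> bhat \<omega> \<in> carrier_vec K" unfolding bh using Gc Dc \<beta>s y by auto
    have Hbh: "\<And>\<omega>. \<omega> \<in> space P \<Longrightarrow> H *\<^sub>v bhat \<omega> = h"
    proof -
      fix \<omega> assume \<omega>: "\<omega> \<in> space P"
      have yw: "y \<omega> \<in> carrier_vec T" using y \<omega> by auto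
      have "H *\<^sub>v bhat \<omega> = H *\<^sub>v (G *\<^sub>v y \<omega>) + (H *\<^sub>v \<beta>s - H *\<^sub>v (D *\<^sub>v \<beta>s))"
        unfolding bh using yw Gc Dc \<beta>s
        by (simp add: mult_add_distrib_mat_vec[OF Hc] mult_minus_distrib_mat_vec[OF Hc])
      also have "H *\<^sub>v (G *\<^sub>v y \<omega>) = (H * G) *\<^sub>v y \<omega>" using yw by (simp add: dsimps dims3)
      also have "H *\<^sub>v (D *\<^sub>v \<beta>s) = (H * D) *\<^sub>v \<beta>s" by (simp add: dsimps dims3)
      finally show "H *\<^sub>v bhat \<omega> = h" unfolding HG HDz Hbs using yw \<beta>s hc by simp
    qed
    have NCc: "N\<^sup>T * C \<in> carrier_mat k K" using Nc Cc by simp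
    have cyv: "\<And>\<omega>. \<omega> \<in> space P \<Longrightarrow> N\<^sup>T * X\<^sup>T * Pi *\<^sub>v y \<omega> \<in> carrier_vec k"
    proof -
      fix \<omega> assume \<omega>: "\<omega> \<in> space P"
      have yw: "y \<omega> \<in> carrier_vec T" using y \<omega> by auto
      have tN: "N\<^sup>T \<in> carrier_mat k K" using Nc by simp
      have tX: "X\<^sup>T \<in> carrier_mat K T" using X by simp
      show "N\<^sup>T * X\<^sup>T * Pi *\<^sub>v y \<omega> \<in> carrier_vec k"
        using mult_mat_vec_carrier[OF mult_carrier_mat[OF mult_carrier_mat[OF tN tX] Pi] yw] .
    qed
    have NCbh: "\<And>\<omega>. \<omega> \<in> space P \<Longrightarrow> N\<^sup>T * C *\<^sub>v bhat \<omega> = N\<^sup>T * X\<^sup>T * Pi *\<^sub>v y \<omega>"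
    proof -
      fix \<omega> assume \<omega>: "\<omega> \<in> space P"
      have yw: "y \<omega> \<in> carrier_vec T" using y \<omega> by auto
      have "N\<^sup>T * C *\<^sub>v bhat \<omega> = N\<^sup>T * C *\<^sub>v (G *\<^sub>v y \<omega>) + (N\<^sup>T * C *\<^sub>v \<beta>s - N\<^sup>T * C *\<^sub>v (D *\<^sub>v \<beta>s))"
        unfolding bh using yw Gc Dc \<beta>s
        by (simp add: mult_add_distrib_mat_vec[OF NCc] mult_minus_distrib_mat_vec[OF NCc])
      also have "N\<^sup>T * C *\<^sub>v (G *\<^sub>v y \<omega>) = (N\<^sup>T * C * G) *\<^sub>v y \<omega>" using yw by (simp add: dsimps dims3)
      also have "N\<^sup>T * C *\<^sub>v (D *\<^sub>v \<beta>s) = (N\<^sup>T * C * D) *\<^sub>v \<beta>s" by (simp add: dsimps dims3)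
      finally have e: "N\<^sup>T * C *\<^sub>v bhat \<omega> = N\<^sup>T * X\<^sup>T * Pi *\<^sub>v y \<omega> + (N\<^sup>T * C *\<^sub>v \<beta>s - N\<^sup>T * C *\<^sub>v \<beta>s)"
        unfolding NCG NCD .
      have c1: "N\<^sup>T * C *\<^sub>v \<beta>s \<in> carrier_vec k" using NCc \<beta>s by simp
      have tN: "N\<^sup>T \<in> carrier_mat k K" using Nc by simp
      have tX: "X\<^sup>T \<in> carrier_mat K T" using X by simp
      have c2: "N\<^sup>T * X\<^sup>T * Pi *\<^sub>v y \<omega> \<in> carrier_vec k"
        using mult_mat_vec_carrier[OF mult_carrier_mat[OF mult_carrier_mat[OF tN tX] Pi] yw] .
      show "N\<^sup>T * C *\<^sub>v bhat \<omega> = N\<^sup>T * X\<^sup>T * Pi *\<^sub>v y \<omega>"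
        unfolding e minus_cancel_vec[OF c1] right_zero_vec[OF c2] ..
    qed
    have uniq: "\<And>\<omega> b. \<omega> \<in> space P \<Longrightarrow> b \<in> carrier_vec K \<Longrightarrow> H *\<^sub>v b = h \<Longrightarrow>
        N\<^sup>T * C *\<^sub>v b = N\<^sup>T * X\<^sup>T * Pi *\<^sub>v y \<omega> \<Longrightarrow> b = bhat \<omega>"
    proof -
      fix \<omega> b assume \<omega>: "\<omega> \<in> space P" and b: "b \<in> carrier_vec K" and Hb: "H *\<^sub>v b = h"
        and NCb: "N\<^sup>T * C *\<^sub>v b = N\<^sup>T * X\<^sup>T * Pi *\<^sub>v y \<omega>"
      have bw: "bhat \<omega> \<in> carrier_vec K" using bhc \<omega> .
      define dd where "dd = b - bhat \<omega>"
      have ddc: "dd \<in> carrier_vec K" unfolding dd_def using b bw by simp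
      have "H *\<^sub>v dd = H *\<^sub>v b - H *\<^sub>v bhat \<omega>" unfolding dd_def using mult_minus_distrib_mat_vec[OF Hc b bw] .
      also have "\<dots> = 0\<^sub>v (dim_row H)" unfolding Hb Hbh[OF \<omega>] dH using hc by simp
      finally obtain c where c: "c \<in> carrier_vec k" and ddN: "dd = N *\<^sub>v c"
        using kerH ddc unfolding k_def by blast
      have "N\<^sup>T * C *\<^sub>v dd = N\<^sup>T * C *\<^sub>v b - N\<^sup>T * C *\<^sub>v bhat \<omega>"
        unfolding dd_def using mult_minus_distrib_mat_vec[OF NCc b bw] .
      also have "\<dots> = 0\<^sub>v k" unfolding NCb NCbh[OF \<omega>] by (rule minus_cancel_vec[OF cyv[OF \<omega>]])
      finally have "S *\<^sub>v c = 0\<^sub>v k" unfolding ddN SC using c by (simp add: dsimps dims3)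
      then have "c = 0\<^sub>v k" using kerS c by blast
      then have dd0: "dd = 0\<^sub>v K" unfolding ddN using Nc by simp
      show "b = bhat \<omega>"
      proof (rule eq_vecI)
        fix i assume i: "i < dim_vec (bhat \<omega>)"
        have "dd $ i = 0" using dd0 i bw by simp
        then show "b $ i = bhat \<omega> $ i" unfolding dd_def using i b bw by simp
      qed (use b bw in simp)
    qed
    have Hbb: "H *\<^sub>v (\<beta>s - \<beta>) = 0\<^sub>v (dim_row H)"
      using mult_minus_distrib_mat_vec[OF Hc \<beta>s \<beta>] Hbs Hbeta hc dH by simp
    obtain dv where dv: "dv \<in> carrier_vec k" and edv: "\<beta>s - \<beta> = N *\<^sub>v dv"
      using kerH Hbb \<beta>s \<beta> unfolding k_def by (metis minus_carrier_vec)
    have De: "D *\<^sub>v \<beta>s - D *\<^sub>v \<beta> = \<beta>s - \<beta>"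
    proof -
      have "D *\<^sub>v \<beta>s - D *\<^sub>v \<beta> = D *\<^sub>v (\<beta>s - \<beta>)" using mult_minus_distrib_mat_vec[OF Dc \<beta>s \<beta>] by simp
      also have "\<dots> = (D * N) *\<^sub>v dv" unfolding edv using dv by (simp add: dsimps dims3)
      finally show ?thesis unfolding DN edv .
    qed
    have bhu: "\<And>\<omega>. \<omega> \<in> space P \<Longrightarrow> bhat \<omega> = \<beta> + G *\<^sub>v u \<omega>"
    proof -
      fix \<omega> assume \<omega>: "\<omega> \<in> space P"
      have yw: "y \<omega> \<in> carrier_vec T" using y \<omega> by auto
      have Gu: "G *\<^sub>v u \<omega> = G *\<^sub>v y \<omega> - D *\<^sub>v \<beta>"
      proof -
        have "G *\<^sub>v u \<omega> = G *\<^sub>v y \<omega> - G *\<^sub>v (X *\<^sub>v \<beta>)"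
          unfolding uD using mult_minus_distrib_mat_vec[OF Gc yw, of "X *\<^sub>v \<beta>"] X \<beta> by simp
        also have "G *\<^sub>v (X *\<^sub>v \<beta>) = D *\<^sub>v \<beta>" unfolding GX[symmetric] by (simp add: dsimps dims3)
        finally show ?thesis .
      qed
      show "bhat \<omega> = \<beta> + G *\<^sub>v u \<omega>"
      proof (rule eq_vecI)
        fix i assume i: "i < dim_vec (\<beta> + G *\<^sub>v u \<omega>)"
        then have iK: "i < K" using \<beta> Gc by simp
        have "(D *\<^sub>v \<beta>s - D *\<^sub>v \<beta>) $ i = (\<beta>s - \<beta>) $ i" unfolding De ..
        then have "(D *\<^sub>v \<beta>s) $ i - (D *\<^sub>v \<beta>) $ i = \<beta>s $ i - \<beta> $ i" using iK Dc \<beta>s \<beta> by simp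
        then show "bhat \<omega> $ i = (\<beta> + G *\<^sub>v u \<omega>) $ i"
          unfolding bh Gu using iK Dc Gc \<beta>s \<beta> yw by simp
      qed (use bhc[OF \<omega>] \<beta> Gc in auto)
    qed
    have comp: "\<And>\<omega> i. \<omega> \<in> space P \<Longrightarrow> i < K \<Longrightarrow> bhat \<omega> $ i = \<beta> $ i + (\<Sum>l\<in>{0..<T}. G $$ (i, l) * u \<omega> $ l)"
    proof -
      fix \<omega> i assume \<omega>: "\<omega> \<in> space P" and i: "i < K"
      have "(G *\<^sub>v u \<omega>) $ i = (\<Sum>l\<in>{0..<T}. G $$ (i, l) * u \<omega> $ l)"
        using Gc i dimu by (simp add: scalar_prod_def)
      then show "bhat \<omega> $ i = \<beta> $ i + (\<Sum>l\<in>{0..<T}. G $$ (i, l) * u \<omega> $ l)"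
        unfolding bhu[OF \<omega>] using i \<beta> Gc by simp
    qed
    have intGu: "\<And>i. integrable P (\<lambda>\<omega>. \<Sum>l\<in>{0..<T}. G $$ (i, l) * u \<omega> $ l)"
      by (rule Bochner_Integration.integrable_sum) (auto intro!: integrable_mult_right intu)
    have EGu: "\<And>i. integral\<^sup>L P (\<lambda>\<omega>. \<Sum>l\<in>{0..<T}. G $$ (i, l) * u \<omega> $ l) = 0"
      by (subst Bochner_Integration.integral_sum) (auto intro!: integrable_mult_right intu simp: Eu0)
    have Ebh: "vexp P bhat K = \<beta>"
    proof (rule eq_vecI)
      fix i assume i: "i < dim_vec \<beta>"
      then have iK: "i < K" using \<beta> by simp
      have "vexp P bhat K $ i = integral\<^sup>L P (\<lambda>\<omega>. bhat \<omega> $ i)" using iK by (simp add: vexp_def)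
      also have "\<dots> = integral\<^sup>L P (\<lambda>\<omega>. \<beta> $ i + (\<Sum>l\<in>{0..<T}. G $$ (i, l) * u \<omega> $ l))"
        by (rule Bochner_Integration.integral_cong) (auto simp: comp iK)
      also have "\<dots> = \<beta> $ i"
        by (subst Bochner_Integration.integral_add[OF p.integrable_const intGu]) (simp add: EGu p.prob_space)
      finally show "vexp P bhat K $ i = \<beta> $ i" .
    qed (use \<beta> in \<open>simp add: vexp_def\<close>)
    have Vbh: "vcov P bhat K = \<sigma>2 \<cdot>\<^sub>m W"
    proof (rule eq_matI)
      fix i j assume i: "i < dim_row (\<sigma>2 \<cdot>\<^sub>m W)" and j: "j < dim_col (\<sigma>2 \<cdot>\<^sub>m W)"
      then have iK: "i < K" and jK: "j < K" using Wc by auto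
      have "vcov P bhat K $$ (i, j) = integral\<^sup>L P (\<lambda>\<omega>. (bhat \<omega> $ i - \<beta> $ i) * (bhat \<omega> $ j - \<beta> $ j))"
        using iK jK Ebh by (simp add: vcov_def)
      also have "\<dots> = integral\<^sup>L P (\<lambda>\<omega>. \<Sum>l\<in>{0..<T}. \<Sum>m\<in>{0..<T}. (G $$ (i, l) * G $$ (j, m)) * (u \<omega> $ l * u \<omega> $ m))"
        by (rule Bochner_Integration.integral_cong) (simp_all add: comp iK jK sum_product mult_ac)
      also have "\<dots> = (\<Sum>l\<in>{0..<T}. integral\<^sup>L P (\<lambda>\<omega>. \<Sum>m\<in>{0..<T}. (G $$ (i, l) * G $$ (j, m)) * (u \<omega> $ l * u \<omega> $ m)))"
      proof (rule Bochner_Integration.integral_sum)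
        fix l assume l: "l \<in> {0..<T}"
        show "integrable P (\<lambda>\<omega>. \<Sum>m\<in>{0..<T}. (G $$ (i, l) * G $$ (j, m)) * (u \<omega> $ l * u \<omega> $ m))"
          by (rule Bochner_Integration.integrable_sum) (use intuu l in \<open>auto intro!: integrable_mult_right\<close>)
      qed
      also have "\<dots> = (\<Sum>l\<in>{0..<T}. \<Sum>m\<in>{0..<T}. integral\<^sup>L P (\<lambda>\<omega>. (G $$ (i, l) * G $$ (j, m)) * (u \<omega> $ l * u \<omega> $ m)))"
      proof (rule sum.cong[OF refl])
        fix l assume l: "l \<in> {0..<T}"
        show "integral\<^sup>L P (\<lambda>\<omega>. \<Sum>m\<in>{0..<T}. (G $$ (i, l) * G $$ (j, m)) * (u \<omega> $ l * u \<omega> $ m))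
          = (\<Sum>m\<in>{0..<T}. integral\<^sup>L P (\<lambda>\<omega>. (G $$ (i, l) * G $$ (j, m)) * (u \<omega> $ l * u \<omega> $ m)))"
          by (rule Bochner_Integration.integral_sum) (use intuu l in \<open>auto intro!: integrable_mult_right\<close>)
      qed
      also have "\<dots> = (\<Sum>l\<in>{0..<T}. \<Sum>m\<in>{0..<T}. (G $$ (i, l) * G $$ (j, m)) * (\<sigma>2 * \<Omega> $$ (l, m)))"
        by (rule sum.cong[OF refl], rule sum.cong[OF refl]) (simp add: Euu0)
      also have "\<dots> = \<sigma>2 * (G * \<Omega> * G\<^sup>T) $$ (i, j)"
      proof -
        have e: "(G * \<Omega> * G\<^sup>T) $$ (i, j) = (\<Sum>l\<in>{0..<T}. G $$ (i, l) * (\<Sum>m\<in>{0..<T}. \<Omega> $$ (l, m) * G $$ (j, m)))"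
          using Gc \<Omega> iK jK by (simp add: scalar_prod_def)
        show ?thesis unfolding e by (simp add: sum_distrib_left mult_ac)
      qed
      also have "\<dots> = (\<sigma>2 \<cdot>\<^sub>m W) $$ (i, j)" unfolding GOG using iK jK Wc by simp
      finally show "vcov P bhat K $$ (i, j) = (\<sigma>2 \<cdot>\<^sub>m W) $$ (i, j)" .
    qed (use Wc in \<open>auto simp: vcov_def\<close>)
    have main: "(\<forall>\<omega> \<in> space P.
             H *\<^sub>v bhat \<omega> = h \<and> N\<^sup>T * C *\<^sub>v bhat \<omega> = N\<^sup>T * X\<^sup>T * Pi *\<^sub>v y \<omega> \<and>
             (\<forall>b \<in> carrier_vec K. H *\<^sub>v b = h \<and> N\<^sup>T * C *\<^sub>v b = N\<^sup>T * X\<^sup>T * Pi *\<^sub>v y \<omega>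
                 \<longrightarrow> b = bhat \<omega>))
          \<and> vexp P bhat K = \<beta>
          \<and> vcov P bhat K = \<sigma>2 \<cdot>\<^sub>m W"
      using Hbh NCbh uniq Ebh Vbh by blast
    show "let bhat = (\<lambda>\<omega>. N * Si * N\<^sup>T * X\<^sup>T * eig_pinv F \<Lambda> *\<^sub>v y \<omega>
                        + (1\<^sub>m K - N * Si * N\<^sup>T * (X\<^sup>T * eig_pinv F \<Lambda> * X)) *\<^sub>v \<beta>s)
       in (\<forall>\<omega> \<in> space P.
             H *\<^sub>v bhat \<omega> = h \<and> N\<^sup>T * (X\<^sup>T * eig_pinv F \<Lambda> * X) *\<^sub>v bhat \<omega> = N\<^sup>T * X\<^sup>T * eig_pinv F \<Lambda> *\<^sub>v y \<omega> \<and>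
             (\<forall>b \<in> carrier_vec K. H *\<^sub>v b = h \<and> N\<^sup>T * (X\<^sup>T * eig_pinv F \<Lambda> * X) *\<^sub>v b = N\<^sup>T * X\<^sup>T * eig_pinv F \<Lambda> *\<^sub>v y \<omega>
                 \<longrightarrow> b = bhat \<omega>))
          \<and> vexp P bhat K = \<beta>
          \<and> vcov P bhat K = \<sigma>2 \<cdot>\<^sub>m (N * Si * N\<^sup>T)"
      unfolding Let_def using main[unfolded bhat_def G_def D_def W_def C_def Pi_def] .
  qed
qed

end
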